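(* In the discrete setting described in the context, suppose $x\in M$ satisfies $w^t(x)=w^{t-1}(x)+c^t(x)$. If $c^t(z)\ge c^t(x)$ for all $z\in M$ with $z\ge x$, then $w^t(z)\ge w^{t-1}(z)+c^t(x)$ for all $z\in M$ with $z\ge x$. Similarly, if $c^t(z)\ge c^t(x)$ for all $z\in M$ with $z\le x$, then $w^t(z)\ge w^{t-1}(z)+c^t(x)$ for all $z\in M$ with $z\le x$.
   Context: Discrete setting: a finite set of states $M=\{x_1,\dots,x_m\}\subset\mathbb{R}^+$ with $x_1=0$ and equal spacing $x_{k+1}-x_k=\delta$; a norm $\|\cdot\|$ on $\mathbb{R}$; $\theta\ge1$ and $N(\cdot)=\theta\|\cdot\|$; cost functions $c^t:M\to\mathbb{R}^+$. Work function: $w^0(x)=N(x)$ and $w^t(x)=\min_{y\in M}\{w^{t-1}(y)+c^t(y)+\theta\|x-y\|\}$ for $x\in M$. *)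

theory Defs
  imports Main "HOL.Real"
begin

definition is_norm_R :: "(real \<Rightarrow> real) \<Rightarrow> bool" where
  "is_norm_R nrm \<longleftrightarrow>
     (\<forall>x. nrm x \<ge> 0) \<and> (\<forall>x. nrm x = 0 \<longleftrightarrow> x = 0) \<and>
     (\<forall>a x. nrm (a * x) = \<bar>a\<bar> * nrm x) \<and>
     (\<forall>x y. nrm (x + y) \<le> nrm x + nrm y)"

definition states :: "nat \<Rightarrow> real \<Rightarrow> real set" where
  "states m \<delta> = (\<lambda>k. real k * \<delta>) ` {..<m}"

fun work :: "real set \<Rightarrow> (real \<Rightarrow> real) \<Rightarrow> real \<Rightarrow> (nat \<Rightarrow> real \<Rightarrow> real)
              \<Rightarrow> nat \<Rightarrow> real \<Rightarrow> real" where
  "work M nrm \<theta> c 0 x = \<theta> * nrm x"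
| "work M nrm \<theta> c (Suc t) x =
     Min ((\<lambda>y. work M nrm \<theta> c t y + c (Suc t) y + \<theta> * nrm (x - y)) ` M)"

end

theory Submission
  imports Defs
begin

lemma nrm_abs: assumes "is_norm_R nrm" shows "nrm u = \<bar>u\<bar> * nrm 1"
  using assms unfolding is_norm_R_def by (metis mult.right_neutral)

lemma nrm_tri: assumes "is_norm_R nrm" shows "nrm (a + b) \<le> nrm a + nrm b"
  using assms unfolding is_norm_R_def by blast

lemma states_fin: "finite (states m \<delta>)" "m \<ge> 1 \<Longrightarrow> states m \<delta> \<noteq> {}"
  unfolding states_def by (auto simp: lessThan_empty_iff)

lemma work_le: assumes "finite M" "M \<noteq> {}" "y \<in> M"
  shows "work M nrm \<theta> c (Suc s) z \<le> work M nrm \<theta> c s y + c (Suc s) y + \<theta> * nrm (z - y)"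
  using assms by (auto intro!: Min_le)

lemma work_lip: assumes "finite M" "M \<noteq> {}" "is_norm_R nrm" "\<theta> \<ge> 0"
  shows "work M nrm \<theta> c s z \<le> work M nrm \<theta> c s y + \<theta> * nrm (z - y)"
proof (cases s)
  case 0
  have "nrm z \<le> nrm y + nrm (z - y)" using nrm_tri[OF assms(3), of y "z-y"] by simp
  then show ?thesis using 0 assms(4)
    by (simp add: mult_left_mono distrib_left[symmetric])
next
  case (Suc s')
  let ?f = "\<lambda>x y'. work M nrm \<theta> c s' y' + c (Suc s') y' + \<theta> * nrm (x - y')"
  have "Min (?f y ` M) \<in> ?f y ` M" using assms by (intro Min_in) auto
  then obtain y' where y': "y' \<in> M" "work M nrm \<theta> c (Suc s') y = ?f y y'" using Suc by auto
  have "nrm (z - y') \<le> nrm (y - y') + nrm (z - y)" using nrm_tri[OF assms(3), of "y-y'" "z-y"] by simp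
  hence "\<theta> * nrm (z - y') \<le> \<theta> * nrm (y - y') + \<theta> * nrm (z - y)"
    using assms(4) by (simp add: mult_left_mono distrib_left[symmetric])
  moreover have "work M nrm \<theta> c (Suc s') z \<le> ?f z y'" using work_le[OF assms(1,2) y'(1)] .
  ultimately show ?thesis using y'(2) Suc by simp
qed

theorem lemma8:
  fixes m :: nat and \<delta> \<theta> :: real and nrm :: "real \<Rightarrow> real"
    and c :: "nat \<Rightarrow> real \<Rightarrow> real" and t :: nat and x :: real
  assumes hm: "m \<ge> 1" and h\<delta>: "\<delta> > 0"
    and hnorm: "is_norm_R nrm" and h\<theta>: "\<theta> \<ge> 1"
    and hc: "\<And>s y. y \<in> states m \<delta> \<Longrightarrow> c s y \<ge> 0"
    and ht: "t \<ge> 1"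
    and hx: "x \<in> states m \<delta>"
    and hw: "work (states m \<delta>) nrm \<theta> c t x = work (states m \<delta>) nrm \<theta> c (t - 1) x + c t x"
  shows "((\<forall>z \<in> states m \<delta>. z \<ge> x \<longrightarrow> c t z \<ge> c t x) \<longrightarrow>
            (\<forall>z \<in> states m \<delta>. z \<ge> x \<longrightarrow>
               work (states m \<delta>) nrm \<theta> c t z \<ge> work (states m \<delta>) nrm \<theta> c (t - 1) z + c t x))
       \<and> ((\<forall>z \<in> states m \<delta>. z \<le> x \<longrightarrow> c t z \<ge> c t x) \<longrightarrow>
            (\<forall>z \<in> states m \<delta>. z \<le> x \<longrightarrow>
               work (states m \<delta>) nrm \<theta> c t z \<ge> work (states m \<delta>) nrm \<theta> c (t - 1) z + c t x))"
proof -
  define M where "M = states m \<delta>"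
  define s where "s = t - 1"
  have tS: "t = Suc s" using ht s_def by simp
  have fin: "finite M" and ne: "M \<noteq> {}" using states_fin hm M_def by auto
  have th0: "\<theta> \<ge> 0" using h\<theta> by simp
  define W where "W = work M nrm \<theta> c s"
  define n1 where "n1 = nrm 1"
  have n1: "n1 \<ge> 0" using hnorm unfolding is_norm_R_def n1_def by blast
  have N: "\<And>u. nrm u = \<bar>u\<bar> * n1" using nrm_abs[OF hnorm] n1_def by blast
  have lip: "\<And>a b. W a \<le> W b + \<theta> * (\<bar>a - b\<bar> * n1)"
    using work_lip[OF fin ne hnorm th0] W_def N by metis
  have hwx: "work M nrm \<theta> c t x = W x + c t x" using hw M_def W_def s_def by simp
  have hxM: "x \<in> M" using hx M_def by simp
  have key: "W z + c t x \<le> work M nrm \<theta> c t z"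
    if zM: "z \<in> M" and cz: "\<forall>y\<in>M. (if d then x \<le> y else y \<le> x) \<longrightarrow> c t y \<ge> c t x"
      and side: "if d then x \<le> z else z \<le> x" for z d
  proof -
    let ?f = "\<lambda>y. W y + c t y + \<theta> * nrm (z - y)"
    have "Min (?f ` M) \<in> ?f ` M" using fin ne by (intro Min_in) auto
    then obtain y where yM: "y \<in> M" and wz: "work M nrm \<theta> c t z = ?f y"
      using tS W_def by auto
    show ?thesis
    proof (cases "if d then x \<le> y else y \<le> x")
      case True
      hence "c t y \<ge> c t x" using cz yM by blast
      moreover have "W z \<le> W y + \<theta> * (\<bar>z - y\<bar> * n1)" using lip .
      ultimately show ?thesis using wz N by simp
    next
      case False
      have abs: "\<bar>z - y\<bar> = \<bar>z - x\<bar> + \<bar>x - y\<bar>" using False side by (auto split: if_splits)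
      have "work M nrm \<theta> c t x \<le> W y + c t y + \<theta> * nrm (x - y)"
        using work_le[OF fin ne yM, of nrm \<theta> c s x] tS W_def by simp
      hence A: "W x + c t x \<le> W y + c t y + \<theta> * (\<bar>x - y\<bar> * n1)" using hwx N by simp
      have B: "W z \<le> W x + \<theta> * (\<bar>z - x\<bar> * n1)" using lip .
      have "\<theta> * (\<bar>z - y\<bar> * n1) = \<theta> * (\<bar>z - x\<bar> * n1) + \<theta> * (\<bar>x - y\<bar> * n1)"
        using abs by (simp add: algebra_simps)
      then show ?thesis using A B wz N by simp
    qed
  qed
  show ?thesis
  proof (intro conjI impI ballI)
    fix z assume h: "\<forall>z\<in>states m \<delta>. x \<le> z \<longrightarrow> c t x \<le> c t z" and z: "z \<in> states m \<delta>" "x \<le> z"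
    have "W z + c t x \<le> work M nrm \<theta> c t z"
      by (rule key[where d=True]) (use h z M_def in auto)
    then show "work (states m \<delta>) nrm \<theta> c (t - 1) z + c t x \<le> work (states m \<delta>) nrm \<theta> c t z"
      using M_def W_def s_def by simp
  next
    fix z assume h: "\<forall>z\<in>states m \<delta>. z \<le> x \<longrightarrow> c t x \<le> c t z" and z: "z \<in> states m \<delta>" "z \<le> x"
    have "W z + c t x \<le> work M nrm \<theta> c t z"
      by (rule key[where d=False]) (use h z M_def in auto)
    then show "work (states m \<delta>) nrm \<theta> c (t - 1) z + c t x \<le> work (states m \<delta>) nrm \<theta> c t z"
      using M_def W_def s_def by simp
  qed
qed

end
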